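(* Under the strong-coordination polar coding scheme described in the context, $$\mathbb{D}\Big(\widetilde p_{X_{1:k}^{1:N}Y_{1:k}^{1:N}}\,\Big\|\,\prod_{i=1}^k\widetilde p_{X_i^{1:N}Y_i^{1:N}}\Big)\le(k-1)\,\delta_N^{(C)},$$ where $\delta_N^{(C)}=O(N^{9/4}\delta_N^{1/4})$ is a quantity (independent of $i,k$) bounding, for every $i\in\{2,\dots,k\}$, $\mathbb{D}(\widetilde p_{X_{i-1:i}^{1:N}Y_{i-1:i}^{1:N}\bar C_1}\|\widetilde p_{Y_{i-1}^{1:N}X_{i-1}^{1:N}}\widetilde p_{X_i^{1:N}Y_i^{1:N}\bar C_1})$.
   Context: All logarithms base 2, entropies in bits; $\mathbb{D}$ is Kullback–Leibler divergence. $\widetilde p_{X_{1:k}^{1:N}Y_{1:k}^{1:N}}$ is the joint law of $(X_i^{1:N},\widetilde Y_i^{1:N})_{i=1}^k$. For a vector $a^{1:N}$ and index set $\mathcal{A}$, $a^{1:N}[\mathcal{A}]$ is the subvector indexed by $\mathcal{A}$. Setting (strong coordination scheme): Let $q_{XYV}$ be a distribution on finite $\mathcal{X}\times\mathcal{Y}\times\mathcal{V}$ with $X\to V\to Y$ a Markov chain and $|\mathcal{Y}|,|\mathcal{V}|$ prime (identified with $\mathbb{F}_{|\mathcal{Y}|},\mathbb{F}_{|\mathcal{V}|}$). Let $N=2^n$, $G_n=\begin{bmatrix}1&0\\1&1\end{bmatrix}^{\otimes n}$, $(X^{1:N},Y^{1:N},V^{1:N})$ i.i.d. $q_{XYV}$,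 $U^{1:N}=V^{1:N}G_n$, $T^{1:N}=Y^{1:N}G_n$. Fix $\beta\in(0,1/2)$, $\delta_N=2^{-N^\beta}$, and $\mathcal{H}_V=\{j:H(U^j|U^{1:j-1})>\delta_N\}$, $\mathcal{V}_{V|X}=\{j:H(U^j|U^{1:j-1}X^{1:N})>\log|\mathcal{V}|-\delta_N\}$, $\mathcal{V}_{Y|V}=\{j:H(T^j|T^{1:j-1}V^{1:N})>\log|\mathcal{Y}|-\delta_N\}$, $\mathcal{V}_{V|XY}=\{j:H(U^j|U^{1:j-1}X^{1:N}Y^{1:N})>\log|\mathcal{V}|-\delta_N\}$; $\mathcal{F}_1=\mathcal{H}_V^c$, $\mathcal{F}_2=\mathcal{V}_{V|XY}$, $\mathcal{F}_3=\mathcal{V}_{V|X}\setminus\mathcal{V}_{V|XY}$, $\mathcal{F}_4=\mathcal{H}_V\setminus\mathcal{V}_{V|X}$. Over $k$ blocks, Node 1 observes $X_i^{1:N}$ i.i.d. $q_X$, independent across blocks. Common randomness: $\bar C_1$ uniform on $\mathcal{V}^{|\mathcal{F}_2|}$ and $C_1,\dots,C_k$ uniform on $\mathcal{V}^{|\mathcal{F}_3|}$, all independent. In block $i$, Node 1 sets $\widetilde U_i^{1:N}[\mathcal{F}_2]=\bar C_1$, $\widetilde U_i^{1:N}[\mathcal{F}_3]=C_i$, and for remaining $j$ in increasing order draws $\widetilde U_i^j$ from $q_{U^j|U^{1:j-1}}(\cdot|\widetilde U_i^{1:j-1})$ if $j\in\mathcal{F}_1$ and from $q_{U^j|U^{1:j-1}X^{1:N}}(\cdot|\widetilde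 U_i^{1:j-1},X_i^{1:N})$ if $j\in\mathcal{F}_4$. It sends $M_i=\widetilde U_i^{1:N}[\mathcal{F}_4]$ and the randomness $C_i'$ used for $\widetilde U_i^{1:N}[\mathcal{F}_1]$. Node 2 reconstructs $\widetilde U_i^{1:N}$, sets $\widetilde V_i^{1:N}=\widetilde U_i^{1:N}G_n$, then for $j=1,\dots,N$ draws $\widetilde T_i^j$ uniformly on $\mathcal{Y}$ if $j\in\mathcal{V}_{Y|V}$ and from $q_{T^j|T^{1:j-1}V^{1:N}}(\cdot|\widetilde T_i^{1:j-1},\widetilde V_i^{1:N})$ otherwise (fresh local randomness), and outputs $\widetilde Y_i^{1:N}=\widetilde T_i^{1:N}G_n$. $\widetilde p$ denotes distributions induced by the scheme. *)

theory Defs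
  imports "HOL-Probability.Probability"
begin

text \<open>Blocks of length N are lists indexed 0..N-1 (the paper's index j corresponds to j-1).
  Alphabets Y and V are identified with F_p, represented as nat in {..<p} with arithmetic mod p.\<close>

primrec iid :: "nat \<Rightarrow> 'a pmf \<Rightarrow> 'a list pmf" where
  "iid 0 p = return_pmf []"
| "iid (Suc m) p = bind_pmf p (\<lambda>a. map_pmf (\<lambda>as. a # as) (iid m p))"

primrec indep_list :: "'a pmf list \<Rightarrow> 'a list pmf" where
  "indep_list [] = return_pmf []"
| "indep_list (p # ps) = bind_pmf p (\<lambda>a. map_pmf (\<lambda>as. a # as) (indep_list ps))"

text \<open>Row vector times G_n = [[1,0],[1,1]]^{\<otimes>n} over F_p: G_n(i,j)=1 iff bits of j are bits of i.\<close>
definition polar :: "nat \<Rightarrow> nat \<Rightarrow> nat list \<Rightarrow> nat list" where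
  "polar p n a = map (\<lambda>j. (\<Sum>i<2^n. if (\<forall>b<n. bit j b \<longrightarrow> bit i b) then a ! i else 0) mod p) [0..<2^n]"

definition shannon_ent :: "'a pmf \<Rightarrow> real" where
  "shannon_ent p = - (\<Sum>a\<in>set_pmf p. pmf p a * log 2 (pmf p a))"

definition cond_ent :: "('a \<times> 'b) pmf \<Rightarrow> real" where
  "cond_ent J = shannon_ent J - shannon_ent (map_pmf snd J)"

text \<open>KL divergence in bits (used only where the support of p is contained in that of r).\<close>
definition KL :: "'a pmf \<Rightarrow> 'a pmf \<Rightarrow> real" where
  "KL p r = (\<Sum>a\<in>set_pmf p. pmf p a * log 2 (pmf p a / pmf r a))"

definition condk :: "('a \<times> 'b) pmf \<Rightarrow> 'b \<Rightarrow> 'a pmf" where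
  "condk J b = map_pmf fst (cond_pmf J {z. snd z = b})"

definition Xs :: "('x \<times> nat \<times> nat) list \<Rightarrow> 'x list" where "Xs w = map fst w"
definition Ys :: "('x \<times> nat \<times> nat) list \<Rightarrow> nat list" where "Ys w = map (fst \<circ> snd) w"
definition Vs :: "('x \<times> nat \<times> nat) list \<Rightarrow> nat list" where "Vs w = map (snd \<circ> snd) w"

text \<open>(X^{1:N},Y^{1:N},V^{1:N}) i.i.d. q_XYV, N = 2^n; U = V G_n, T = Y G_n.\<close>
definition blk :: "('x \<times> nat \<times> nat) pmf \<Rightarrow> nat \<Rightarrow> ('x \<times> nat \<times> nat) list pmf" where
  "blk q n = iid (2^n) q"
definition Uof :: "nat \<Rightarrow> nat \<Rightarrow> ('x \<times> nat \<times> nat) list \<Rightarrow> nat list" where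
  "Uof qV n w = polar qV n (Vs w)"
definition Tof :: "nat \<Rightarrow> nat \<Rightarrow> ('x \<times> nat \<times> nat) list \<Rightarrow> nat list" where
  "Tof qY n w = polar qY n (Ys w)"

definition JU where
  "JU q qV n j = map_pmf (\<lambda>w. (Uof qV n w ! j, take j (Uof qV n w))) (blk q n)"
definition JUX where
  "JUX q qV n j = map_pmf (\<lambda>w. (Uof qV n w ! j, (take j (Uof qV n w), Xs w))) (blk q n)"
definition JUXY where
  "JUXY q qV n j = map_pmf (\<lambda>w. (Uof qV n w ! j, (take j (Uof qV n w), (Xs w, Ys w)))) (blk q n)"
definition JTV where
  "JTV q qY n j = map_pmf (\<lambda>w. (Tof qY n w ! j, (take j (Tof qY n w), Vs w))) (blk q n)"

definition deltaN :: "nat \<Rightarrow> real \<Rightarrow> real" where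
  "deltaN n \<beta> = 2 powr (- (((2::real) ^ n) powr \<beta>))"

definition HV where
  "HV q qV n \<beta> = {j. j < 2^n \<and> cond_ent (JU q qV n j) > deltaN n \<beta>}"
definition VVX where
  "VVX q qV n \<beta> = {j. j < 2^n \<and> cond_ent (JUX q qV n j) > log 2 (real qV) - deltaN n \<beta>}"
definition VYV where
  "VYV q qY n \<beta> = {j. j < 2^n \<and> cond_ent (JTV q qY n j) > log 2 (real qY) - deltaN n \<beta>}"
definition VVXY where
  "VVXY q qV n \<beta> = {j. j < 2^n \<and> cond_ent (JUXY q qV n j) > log 2 (real qV) - deltaN n \<beta>}"

definition F1 where "F1 q qV n \<beta> = {..<2^n} - HV q qV n \<beta>"
definition F2 where "F2 q qV n \<beta> = VVXY q qV n \<beta>"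
definition F3 where "F3 q qV n \<beta> = VVX q qV n \<beta> - VVXY q qV n \<beta>"
definition F4 where "F4 q qV n \<beta> = HV q qV n \<beta> - VVX q qV n \<beta>"

text \<open>Node 1: successive generation of the first m entries of U~_i (F_1..F_4 partition {..<N}).\<close>
primrec enc_prefix :: "('x \<times> nat \<times> nat) pmf \<Rightarrow> nat \<Rightarrow> nat \<Rightarrow> real \<Rightarrow> 'x list \<Rightarrow>
    (nat \<Rightarrow> nat) \<Rightarrow> (nat \<Rightarrow> nat) \<Rightarrow> nat \<Rightarrow> nat list pmf" where
  "enc_prefix q qV n \<beta> x cb c 0 = return_pmf []"
| "enc_prefix q qV n \<beta> x cb c (Suc m) =
     bind_pmf (enc_prefix q qV n \<beta> x cb c m) (\<lambda>u. map_pmf (\<lambda>a. u @ [a])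
       (if m \<in> F2 q qV n \<beta> then return_pmf (cb m)
        else if m \<in> F3 q qV n \<beta> then return_pmf (c m)
        else if m \<in> F1 q qV n \<beta> then condk (JU q qV n m) u
        else condk (JUX q qV n m) (u, x)))"

primrec dec_prefix :: "('x \<times> nat \<times> nat) pmf \<Rightarrow> nat \<Rightarrow> nat \<Rightarrow> real \<Rightarrow> nat list \<Rightarrow> nat \<Rightarrow> nat list pmf" where
  "dec_prefix q qY n \<beta> vt 0 = return_pmf []"
| "dec_prefix q qY n \<beta> vt (Suc m) =
     bind_pmf (dec_prefix q qY n \<beta> vt m) (\<lambda>t. map_pmf (\<lambda>a. t @ [a])
       (if m \<in> VYV q qY n \<beta> then pmf_of_set {..<qY}
        else condk (JTV q qY n m) (t, vt)))"

text \<open>One block: from X_i, C-bar_1 and C_i to the output Y~_i.\<close>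
definition block :: "('x \<times> nat \<times> nat) pmf \<Rightarrow> nat \<Rightarrow> nat \<Rightarrow> nat \<Rightarrow> real \<Rightarrow> 'x list \<Rightarrow>
    (nat \<Rightarrow> nat) \<Rightarrow> (nat \<Rightarrow> nat) \<Rightarrow> nat list pmf" where
  "block q qY qV n \<beta> x cb c =
     bind_pmf (enc_prefix q qV n \<beta> x cb c (2^n))
       (\<lambda>u. map_pmf (polar qY n) (dec_prefix q qY n \<beta> (polar qV n u) (2^n)))"

primrec scheme_blocks :: "('x \<times> nat \<times> nat) pmf \<Rightarrow> nat \<Rightarrow> nat \<Rightarrow> nat \<Rightarrow> real \<Rightarrow>
    (nat \<Rightarrow> nat) \<Rightarrow> nat \<Rightarrow> ('x list \<times> nat list) list pmf" where
  "scheme_blocks q qY qV n \<beta> cb 0 = return_pmf []"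
| "scheme_blocks q qY qV n \<beta> cb (Suc k) =
     bind_pmf (scheme_blocks q qY qV n \<beta> cb k) (\<lambda>bs.
     bind_pmf (iid (2^n) (map_pmf fst q)) (\<lambda>x.
     bind_pmf (pmf_of_set (Pi\<^sub>E (F3 q qV n \<beta>) (\<lambda>_. {..<qV}))) (\<lambda>c.
     map_pmf (\<lambda>y. bs @ [(x, y)]) (block q qY qV n \<beta> x cb c))))"

text \<open>Joint law of (C-bar_1, ((X_i, Y~_i))_{i=1..k}) induced by the scheme.\<close>
definition scheme :: "('x \<times> nat \<times> nat) pmf \<Rightarrow> nat \<Rightarrow> nat \<Rightarrow> nat \<Rightarrow> real \<Rightarrow> nat \<Rightarrow>
    ((nat \<Rightarrow> nat) \<times> ('x list \<times> nat list) list) pmf" where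
  "scheme q qY qV n \<beta> k =
     bind_pmf (pmf_of_set (Pi\<^sub>E (F2 q qV n \<beta>) (\<lambda>_. {..<qV})))
       (\<lambda>cb. map_pmf (\<lambda>bs. (cb, bs)) (scheme_blocks q qY qV n \<beta> cb k))"

definition markov_XVY :: "('x \<times> nat \<times> nat) pmf \<Rightarrow> bool" where
  "markov_XVY q = (\<forall>x y v. pmf q (x, y, v) * pmf (map_pmf (\<lambda>(x, y, v). v) q) v
      = pmf (map_pmf (\<lambda>(x, y, v). (x, v)) q) (x, v) * pmf (map_pmf (\<lambda>(x, y, v). (y, v)) q) (y, v))"

end

theory Submission
  imports Defs
begin

lemma marg:
  assumes "finite (set_pmf p)"
  shows "(\<Sum>z\<in>set_pmf p. pmf p z * g (f z)) = (\<Sum>y\<in>set_pmf (map_pmf f p). pmf (map_pmf f p) y * (g y::real))"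
proof -
  have "(\<Sum>z\<in>set_pmf p. pmf p z * g (f z)) = (\<integral>z. g (f z) \<partial>measure_pmf p)"
    using assms by (subst integral_measure_pmf_real[where A="set_pmf p"]) (auto simp: mult.commute)
  also have "\<dots> = (\<integral>y. g y \<partial>measure_pmf (map_pmf f p))" by simp
  also have "\<dots> = (\<Sum>y\<in>set_pmf (map_pmf f p). pmf (map_pmf f p) y * g y)"
    using assms by (subst integral_measure_pmf_real[where A="set_pmf (map_pmf f p)"]) (auto simp: mult.commute)
  finally show ?thesis .
qed

lemma ent_inj:
  assumes "finite (set_pmf p)" "inj_on f (set_pmf p)"
  shows "shannon_ent (map_pmf f p) = shannon_ent p"
proof -
  have "(\<Sum>y\<in>set_pmf (map_pmf f p). pmf (map_pmf f p) y * log 2 (pmf (map_pmf f p) y))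
     = (\<Sum>z\<in>set_pmf p. pmf p z * log 2 (pmf (map_pmf f p) (f z)))"
    using marg[OF assms(1), of "\<lambda>y. log 2 (pmf (map_pmf f p) y)" f] by simp
  also have "\<dots> = (\<Sum>z\<in>set_pmf p. pmf p z * log 2 (pmf p z))"
    using assms(2) by (intro sum.cong) (auto simp: pmf_map_inj)
  finally show ?thesis unfolding shannon_ent_def by simp
qed

lemma point_integral:
  "(\<integral>y. (if y = a then c else 0) \<partial>measure_pmf p) = pmf p a * (c::real)"
  by (subst integral_measure_pmf_real[where A="{a}"]) (auto split: if_splits)

lemma KL_pair:
  assumes fin: "finite (set_pmf J)"
  shows "KL J (pair_pmf (map_pmf fst J) (map_pmf snd J))
       = shannon_ent (map_pmf fst J) + shannon_ent (map_pmf snd J) - shannon_ent J"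
proof -
  let ?A = "map_pmf fst J" and ?B = "map_pmf snd J"
  have pos: "pmf J z > 0" "pmf ?A (fst z) > 0" "pmf ?B (snd z) > 0" if "z \<in> set_pmf J" for z
    using that by (auto simp: pmf_positive)
  have "KL J (pair_pmf ?A ?B) = (\<Sum>z\<in>set_pmf J. pmf J z * log 2 (pmf J z)
     - pmf J z * log 2 (pmf ?A (fst z)) - pmf J z * log 2 (pmf ?B (snd z)))"
    unfolding KL_def
  proof (intro sum.cong refl)
    fix z assume z: "z \<in> set_pmf J"
    obtain a b where zab: "z = (a,b)" by (cases z)
    show "pmf J z * log 2 (pmf J z / pmf (pair_pmf ?A ?B) z) = pmf J z * log 2 (pmf J z)
     - pmf J z * log 2 (pmf ?A (fst z)) - pmf J z * log 2 (pmf ?B (snd z))"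
      using pos[OF z] by (simp add: zab pmf_pair log_divide log_mult algebra_simps)
  qed
  also have "\<dots> = (\<Sum>z\<in>set_pmf J. pmf J z * log 2 (pmf J z))
     - (\<Sum>z\<in>set_pmf J. pmf J z * log 2 (pmf ?A (fst z))) - (\<Sum>z\<in>set_pmf J. pmf J z * log 2 (pmf ?B (snd z)))"
    by (simp add: sum_subtractf)
  also have "(\<Sum>z\<in>set_pmf J. pmf J z * log 2 (pmf ?A (fst z))) = - shannon_ent ?A"
    unfolding shannon_ent_def using marg[OF fin, of "\<lambda>y. log 2 (pmf ?A y)" fst] by simp
  also have "(\<Sum>z\<in>set_pmf J. pmf J z * log 2 (pmf ?B (snd z))) = - shannon_ent ?B"
    unfolding shannon_ent_def using marg[OF fin, of "\<lambda>y. log 2 (pmf ?B y)" snd] by simp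
  finally show ?thesis unfolding shannon_ent_def by simp
qed

lemma gibbs_sum:
  fixes p q :: "'a \<Rightarrow> real"
  assumes "finite S" "\<And>z. z \<in> S \<Longrightarrow> p z > 0" "\<And>z. z \<in> S \<Longrightarrow> q z > 0"
    "sum p S = 1" "sum q S \<le> 1"
  shows "(\<Sum>z\<in>S. p z * log 2 (q z / p z)) \<le> 0"
proof -
  have "(\<Sum>z\<in>S. p z * log 2 (q z / p z)) \<le> (\<Sum>z\<in>S. (q z - p z) / ln 2)"
  proof (intro sum_mono)
    fix z assume z: "z \<in> S"
    have "ln (q z / p z) \<le> q z / p z - 1" using assms(2,3)[OF z] by (intro ln_le_minus_one) auto
    then have "p z * ln (q z / p z) \<le> p z * (q z / p z - 1)"
      using assms(2)[OF z] by (intro mult_left_mono) auto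
    also have "\<dots> = q z - p z" using assms(2)[OF z] by (simp add: field_simps)
    finally show "p z * log 2 (q z / p z) \<le> (q z - p z) / ln 2"
      unfolding log_def by (simp add: divide_right_mono)
  qed
  also have "\<dots> = (sum q S - sum p S) / ln 2" by (simp add: sum_divide_distrib[symmetric] sum_subtractf)
  also have "\<dots> \<le> 0" using assms(4,5) by (simp add: divide_nonpos_pos)
  finally show ?thesis .
qed

lemma pmf_condk:
  assumes "(c,b) \<in> set_pmf J"
  shows "pmf (condk J b) c = pmf J (c,b) / pmf (map_pmf snd J) b"
proof -
  have ne: "set_pmf J \<inter> {z. snd z = b} \<noteq> {}" using assms by auto
  have cin: "(c,b) \<in> set_pmf (cond_pmf J {z. snd z = b})" using ne assms by simp
  have inj: "inj_on fst (set_pmf (cond_pmf J {z. snd z = b}))"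
    using ne by (auto simp: inj_on_def prod_eq_iff)
  have "pmf (condk J b) c = pmf (cond_pmf J {z. snd z = b}) (c,b)"
    unfolding condk_def using pmf_map_inj[OF inj cin] by simp
  also have "\<dots> = pmf J (c,b) / measure J {z. snd z = b}"
    using ne by (simp add: pmf_cond)
  also have "measure J {z. snd z = b} = pmf (map_pmf snd J) b"
    by (simp add: pmf_map vimage_def)
  finally show ?thesis .
qed

lemma submod:
  fixes J :: "('c \<times> 'b \<times> 'r) pmf"
  assumes fin: "finite (set_pmf J)"
  shows "shannon_ent J + shannon_ent (map_pmf (\<lambda>z. fst (snd z)) J)
     \<le> shannon_ent (map_pmf (\<lambda>z. (fst z, fst (snd z))) J) + shannon_ent (map_pmf snd J)"
proof -
  define Jcb where "Jcb = map_pmf (\<lambda>z. (fst z, fst (snd z))) J"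
  define Jbr where "Jbr = map_pmf snd J"
  define Jb where "Jb = map_pmf snd Jcb"
  have Jb': "Jb = map_pmf (\<lambda>z. fst (snd z)) J" unfolding Jb_def Jcb_def by (simp add: pmf.map_comp o_def)
  define q where "q z = pmf Jcb (fst z, fst (snd z)) * pmf Jbr (snd z) / pmf Jb (fst (snd z))" for z
  define Q where "Q = bind_pmf Jbr (\<lambda>y. map_pmf (\<lambda>c. (c, y)) (condk Jcb (fst y)))"
  have mem: "(fst z, fst (snd z)) \<in> set_pmf Jcb" "snd z \<in> set_pmf Jbr" "fst (snd z) \<in> set_pmf Jb"
    if "z \<in> set_pmf J" for z
    using that unfolding Jcb_def Jbr_def Jb' by auto
  have qpos: "q z > 0" if "z \<in> set_pmf J" for z
    using mem[OF that] unfolding q_def by (simp add: pmf_positive)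
  have Qq: "pmf Q z = q z" if "z \<in> set_pmf J" for z
  proof -
    obtain c b r where z: "z = (c,b,r)" by (cases z) auto
    have "pmf Q z = (\<integral>y. (if y = (b,r) then pmf (condk Jcb b) c else 0) \<partial>measure_pmf Jbr)"
      unfolding Q_def pmf_bind
    proof (intro Bochner_Integration.integral_cong refl)
      fix y :: "'b \<times> 'r"
      show "pmf (map_pmf (\<lambda>c. (c, y)) (condk Jcb (fst y))) z = (if y = (b,r) then pmf (condk Jcb b) c else 0)"
      proof (cases "y = (b,r)")
        case True
        have "inj (\<lambda>c. (c, y))" by (auto simp: inj_def)
        then show ?thesis using True pmf_map_inj'[of "\<lambda>c. (c, y)" "condk Jcb (fst y)" c] by (simp add: z)
      next
        case False
        then have "z \<notin> set_pmf (map_pmf (\<lambda>c. (c, y)) (condk Jcb (fst y)))" by (auto simp: z)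
        then show ?thesis using False by (simp add: pmf_eq_0_set_pmf)
      qed
    qed
    also have "\<dots> = pmf Jbr (b,r) * pmf (condk Jcb b) c" by (rule point_integral)
    also have "\<dots> = q z"
      using mem[OF that] unfolding q_def z by (simp add: pmf_condk Jb_def)
    finally show ?thesis .
  qed
  have sumq: "sum q (set_pmf J) \<le> 1"
  proof -
    have "sum q (set_pmf J) = sum (pmf Q) (set_pmf J)" using Qq by simp
    also have "\<dots> = measure Q (set_pmf J)" using fin by (simp add: measure_measure_pmf_finite)
    also have "\<dots> \<le> 1" by simp
    finally show ?thesis .
  qed
  have sump: "sum (pmf J) (set_pmf J) = 1" using fin by (simp add: sum_pmf_eq_1)
  have G: "(\<Sum>z\<in>set_pmf J. pmf J z * log 2 (q z / pmf J z)) \<le> 0"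
    using fin qpos sumq sump by (intro gibbs_sum) (auto simp: pmf_positive)
  have "(\<Sum>z\<in>set_pmf J. pmf J z * log 2 (q z / pmf J z)) =
    (\<Sum>z\<in>set_pmf J. pmf J z * log 2 (pmf Jcb (fst z, fst (snd z))) + pmf J z * log 2 (pmf Jbr (snd z))
       - pmf J z * log 2 (pmf Jb (fst (snd z))) - pmf J z * log 2 (pmf J z))"
  proof (intro sum.cong refl)
    fix z assume z: "z \<in> set_pmf J"
    show "pmf J z * log 2 (q z / pmf J z) = pmf J z * log 2 (pmf Jcb (fst z, fst (snd z))) + pmf J z * log 2 (pmf Jbr (snd z))
       - pmf J z * log 2 (pmf Jb (fst (snd z))) - pmf J z * log 2 (pmf J z)"
    proof -
      have p1: "pmf Jcb (fst z, fst (snd z)) > 0" "pmf Jbr (snd z) > 0" "pmf Jb (fst (snd z)) > 0" "pmf J z > 0"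
        using mem[OF z] z by (auto simp: pmf_positive)
      then show ?thesis unfolding q_def
        by (simp add: log_divide log_mult algebra_simps)
    qed
  qed
  also have "\<dots> = (\<Sum>z\<in>set_pmf J. pmf J z * log 2 (pmf Jcb (fst z, fst (snd z)))) + (\<Sum>z\<in>set_pmf J. pmf J z * log 2 (pmf Jbr (snd z)))
       - (\<Sum>z\<in>set_pmf J. pmf J z * log 2 (pmf Jb (fst (snd z)))) - (\<Sum>z\<in>set_pmf J. pmf J z * log 2 (pmf J z))"
    by (simp add: sum_subtractf sum.distrib)
  also have "(\<Sum>z\<in>set_pmf J. pmf J z * log 2 (pmf Jcb (fst z, fst (snd z)))) = - shannon_ent Jcb"
    unfolding shannon_ent_def Jcb_def using marg[OF fin, of "\<lambda>y. log 2 (pmf Jcb y)" "\<lambda>z. (fst z, fst (snd z))"]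
    by (simp add: Jcb_def)
  also have "(\<Sum>z\<in>set_pmf J. pmf J z * log 2 (pmf Jbr (snd z))) = - shannon_ent Jbr"
    unfolding shannon_ent_def Jbr_def using marg[OF fin, of "\<lambda>y. log 2 (pmf Jbr y)" snd]
    by (simp add: Jbr_def)
  also have "(\<Sum>z\<in>set_pmf J. pmf J z * log 2 (pmf Jb (fst (snd z)))) = - shannon_ent Jb"
    unfolding shannon_ent_def Jb' using marg[OF fin, of "\<lambda>y. log 2 (pmf Jb y)" "\<lambda>z. fst (snd z)"]
    by (simp add: Jb')
  finally show ?thesis using G unfolding shannon_ent_def Jcb_def Jbr_def Jb' by simp
qed



lemma pmf_bind_pair:
  "pmf (bind_pmf \<pi> (\<lambda>c. map_pmf (Pair c) (D c))) (c, x) = pmf \<pi> c * pmf (D c) x"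
proof -
  have "pmf (bind_pmf \<pi> (\<lambda>c. map_pmf (Pair c) (D c))) (c, x)
     = (\<integral>c'. (if c' = c then pmf (D c) x else 0) \<partial>measure_pmf \<pi>)"
    unfolding pmf_bind
  proof (intro Bochner_Integration.integral_cong refl)
    fix c' show "pmf (map_pmf (Pair c') (D c')) (c, x) = (if c' = c then pmf (D c) x else 0)"
    proof (cases "c' = c")
      case True
      have "inj (Pair c)" by (auto simp: inj_def)
      then show ?thesis using True pmf_map_inj'[of "Pair c" "D c" x] by simp
    next
      case False
      then have "(c,x) \<notin> set_pmf (map_pmf (Pair c') (D c'))" by auto
      then show ?thesis using False by (simp add: pmf_eq_0_set_pmf)
    qed
  qed
  also have "\<dots> = pmf \<pi> c * pmf (D c) x" by (rule point_integral)
  finally show ?thesis .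
qed

lemma ent_bind_pair:
  assumes fin: "finite (set_pmf \<pi>)" and finD: "\<And>c. c \<in> set_pmf \<pi> \<Longrightarrow> finite (set_pmf (D c))"
  shows "shannon_ent (bind_pmf \<pi> (\<lambda>c. map_pmf (Pair c) (D c)))
       = shannon_ent \<pi> + (\<Sum>c\<in>set_pmf \<pi>. pmf \<pi> c * shannon_ent (D c))"
proof -
  let ?P = "bind_pmf \<pi> (\<lambda>c. map_pmf (Pair c) (D c))"
  have S: "set_pmf ?P = Sigma (set_pmf \<pi>) (\<lambda>c. set_pmf (D c))" by auto
  have "(\<Sum>z\<in>set_pmf ?P. pmf ?P z * log 2 (pmf ?P z))
     = (\<Sum>c\<in>set_pmf \<pi>. \<Sum>x\<in>set_pmf (D c). pmf \<pi> c * pmf (D c) x * log 2 (pmf \<pi> c * pmf (D c) x))"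
    unfolding S using fin finD by (subst sum.Sigma) (auto intro!: sum.cong simp: pmf_bind_pair)
  also have "\<dots> = (\<Sum>c\<in>set_pmf \<pi>. pmf \<pi> c * log 2 (pmf \<pi> c) * (\<Sum>x\<in>set_pmf (D c). pmf (D c) x)
        + pmf \<pi> c * (\<Sum>x\<in>set_pmf (D c). pmf (D c) x * log 2 (pmf (D c) x)))"
  proof (intro sum.cong refl)
    fix c assume c: "c \<in> set_pmf \<pi>"
    have "(\<Sum>x\<in>set_pmf (D c). pmf \<pi> c * pmf (D c) x * log 2 (pmf \<pi> c * pmf (D c) x))
      = (\<Sum>x\<in>set_pmf (D c). pmf \<pi> c * log 2 (pmf \<pi> c) * pmf (D c) x + pmf \<pi> c * (pmf (D c) x * log 2 (pmf (D c) x)))"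
    proof (intro sum.cong refl)
      fix x assume x: "x \<in> set_pmf (D c)"
      have "pmf \<pi> c > 0" "pmf (D c) x > 0" using c x by (auto simp: pmf_positive)
      then show "pmf \<pi> c * pmf (D c) x * log 2 (pmf \<pi> c * pmf (D c) x) =
        pmf \<pi> c * log 2 (pmf \<pi> c) * pmf (D c) x + pmf \<pi> c * (pmf (D c) x * log 2 (pmf (D c) x))"
        by (simp add: log_mult algebra_simps)
    qed
    then show "(\<Sum>x\<in>set_pmf (D c). pmf \<pi> c * pmf (D c) x * log 2 (pmf \<pi> c * pmf (D c) x))
      = pmf \<pi> c * log 2 (pmf \<pi> c) * (\<Sum>x\<in>set_pmf (D c). pmf (D c) x)
        + pmf \<pi> c * (\<Sum>x\<in>set_pmf (D c). pmf (D c) x * log 2 (pmf (D c) x))"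
      by (simp add: sum.distrib sum_distrib_left)
  qed
  also have "\<dots> = (\<Sum>c\<in>set_pmf \<pi>. pmf \<pi> c * log 2 (pmf \<pi> c)) - (\<Sum>c\<in>set_pmf \<pi>. pmf \<pi> c * shannon_ent (D c))"
    using finD by (simp add: sum_pmf_eq_1 sum.distrib shannon_ent_def sum_subtractf sum_negf)
  finally show ?thesis unfolding shannon_ent_def[of ?P] shannon_ent_def[of \<pi>] by simp
qed

lemma pmf_indep_list:
  "pmf (indep_list ps) xs = (if length xs = length ps then (\<Prod>i<length ps. pmf (ps!i) (xs!i)) else 0)"
proof (induction ps arbitrary: xs)
  case Nil
  then show ?case by (cases xs) (auto simp: pmf_return)
next
  case (Cons p ps)
  have eq: "indep_list (p # ps) = map_pmf (\<lambda>(a,as). a # as) (pair_pmf p (indep_list ps))"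
    by (simp add: pair_pmf_def map_bind_pmf map_pmf_def[symmetric] bind_return_pmf pmf.map_comp o_def)
  have inj: "inj (\<lambda>(a::'a,as). a # as)" by (auto simp: inj_def)
  show ?case
  proof (cases xs)
    case Nil
    then have "xs \<notin> set_pmf (indep_list (p # ps))" by (auto simp: eq)
    then show ?thesis using Nil by (simp add: pmf_eq_0_set_pmf)
  next
    case (Cons a as)
    have "pmf (indep_list (p # ps)) xs = pmf (pair_pmf p (indep_list ps)) (a, as)"
      unfolding eq Cons using pmf_map_inj'[OF inj, of "pair_pmf p (indep_list ps)" "(a,as)"] by simp
    then show ?thesis using Cons.IH[of as] by (simp add: Cons pmf_pair prod.lessThan_Suc_shift del: prod.lessThan_Suc)
  qed
qed

lemma KL_indep:
  fixes M :: "'a list pmf"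
  assumes fin: "finite (set_pmf M)" and len: "\<And>l. l \<in> set_pmf M \<Longrightarrow> length l = k"
  shows "KL M (indep_list (map (\<lambda>i. map_pmf (\<lambda>l. l ! i) M) [0..<k]))
       = (\<Sum>i<k. shannon_ent (map_pmf (\<lambda>l. l ! i) M)) - shannon_ent M"
proof -
  let ?m = "\<lambda>i. map_pmf (\<lambda>l. l ! i) M"
  have "KL M (indep_list (map ?m [0..<k]))
      = (\<Sum>l\<in>set_pmf M. pmf M l * log 2 (pmf M l) - (\<Sum>i<k. pmf M l * log 2 (pmf (?m i) (l ! i))))"
    unfolding KL_def
  proof (intro sum.cong refl)
    fix l assume l: "l \<in> set_pmf M"
    have pos: "pmf (?m i) (l ! i) > 0" for i using l by (auto simp: pmf_positive)
    have pr: "pmf (indep_list (map ?m [0..<k])) l = (\<Prod>i<k. pmf (?m i) (l ! i))"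
      using len[OF l] by (simp add: pmf_indep_list)
    have "log 2 (\<Prod>i<k. pmf (?m i) (l ! i)) = (\<Sum>i<k. log 2 (pmf (?m i) (l ! i)))"
      unfolding log_def using pos by (subst ln_prod) (auto simp: sum_divide_distrib[symmetric] less_imp_neq[symmetric])
    moreover have "(\<Prod>i<k. pmf (?m i) (l ! i)) > 0" using pos by (simp add: prod_pos)
    moreover have "pmf M l > 0" using l by (simp add: pmf_positive)
    ultimately show "pmf M l * log 2 (pmf M l / pmf (indep_list (map ?m [0..<k])) l)
       = pmf M l * log 2 (pmf M l) - (\<Sum>i<k. pmf M l * log 2 (pmf (?m i) (l ! i)))"
      unfolding pr using pos by (simp add: log_divide right_diff_distrib sum_distrib_left less_imp_neq[symmetric])
  qed
  also have "\<dots> = (\<Sum>l\<in>set_pmf M. pmf M l * log 2 (pmf M l)) - (\<Sum>i<k. \<Sum>l\<in>set_pmf M. pmf M l * log 2 (pmf (?m i) (l ! i)))"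
    by (simp add: sum_subtractf sum.swap[of _ "{..<k}"])
  also have "(\<Sum>i<k. \<Sum>l\<in>set_pmf M. pmf M l * log 2 (pmf (?m i) (l ! i))) = (\<Sum>i<k. - shannon_ent (?m i))"
  proof (intro sum.cong refl)
    fix i
    show "(\<Sum>l\<in>set_pmf M. pmf M l * log 2 (pmf (?m i) (l ! i))) = - shannon_ent (?m i)"
      using marg[OF fin, of "\<lambda>y. log 2 (pmf (?m i) y)" "\<lambda>l. l ! i"]
      unfolding shannon_ent_def by simp
  qed
  finally show ?thesis by (simp add: shannon_ent_def sum_negf)
qed



primrec blocksR :: "'b pmf \<Rightarrow> nat \<Rightarrow> 'b list pmf" where
  "blocksR K 0 = return_pmf []"
| "blocksR K (Suc k) = bind_pmf (blocksR K k) (\<lambda>bs. map_pmf (\<lambda>b. bs @ [b]) K)"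

lemma br_len: "l \<in> set_pmf (blocksR K k) \<Longrightarrow> length l = k"
  by (induction k arbitrary: l) auto

lemma br_fin: "finite (set_pmf K) \<Longrightarrow> finite (set_pmf (blocksR K k))"
  by (induction k) auto

lemma br_take: "j \<le> k \<Longrightarrow> map_pmf (take j) (blocksR K k) = blocksR K j"
proof (induction k arbitrary: j)
  case 0 then show ?case by simp
next
  case (Suc k)
  show ?case
  proof (cases "j = Suc k")
    case True
    have "map_pmf (take j) (blocksR K (Suc k)) = map_pmf id (blocksR K (Suc k))"
      by (intro map_pmf_cong refl) (auto dest: br_len simp: True)
    then show ?thesis by (simp add: True)
  next
    case False
    then have jk: "j \<le> k" using Suc.prems by simp
    have "map_pmf (take j) (blocksR K (Suc k)) = bind_pmf (blocksR K k) (\<lambda>bs. return_pmf (take j bs))"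
      unfolding blocksR.simps map_bind_pmf pmf.map_comp
    proof (intro bind_pmf_cong refl)
      fix bs assume "bs \<in> set_pmf (blocksR K k)"
      then have "length bs = k" by (rule br_len)
      then have "(take j \<circ> (\<lambda>b. bs @ [b])) = (\<lambda>_. take j bs)" using jk by (auto simp: fun_eq_iff)
      then show "map_pmf (take j \<circ> (\<lambda>b. bs @ [b])) K = return_pmf (take j bs)" by simp
    qed
    also have "\<dots> = map_pmf (take j) (blocksR K k)" by (simp add: map_pmf_def)
    finally show ?thesis using Suc.IH[OF jk] by simp
  qed
qed

lemma br_nth: assumes "i < k" shows "map_pmf (\<lambda>l. l ! i) (blocksR K k) = K"
proof -
  have "map_pmf (\<lambda>l. l ! i) (blocksR K k) = map_pmf (\<lambda>l. l ! i) (map_pmf (take (Suc i)) (blocksR K k))"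
    by (simp add: pmf.map_comp o_def)
  also have "\<dots> = map_pmf (\<lambda>l. l ! i) (blocksR K (Suc i))" using assms by (simp add: br_take)
  also have "\<dots> = bind_pmf (blocksR K i) (\<lambda>bs. K)"
    unfolding blocksR.simps map_bind_pmf pmf.map_comp
  proof (intro bind_pmf_cong refl)
    fix bs assume "bs \<in> set_pmf (blocksR K i)"
    then have "length bs = i" by (rule br_len)
    then show "map_pmf ((\<lambda>l. l ! i) \<circ> (\<lambda>b. bs @ [b])) K = K" by (simp add: o_def nth_append)
  qed
  finally show ?thesis by simp
qed

lemma br_two: assumes "2 \<le> k" shows "map_pmf (\<lambda>l. (l ! 0, l ! 1)) (blocksR K k) = pair_pmf K K"
proof -
  have "map_pmf (\<lambda>l. (l ! 0, l ! 1)) (blocksR K k) = map_pmf (\<lambda>l. (l ! 0, l ! 1)) (map_pmf (take 2) (blocksR K k))"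
    by (simp add: pmf.map_comp o_def)
  also have "\<dots> = map_pmf (\<lambda>l. (l ! 0, l ! 1)) (blocksR K 2)" using assms by (simp add: br_take)
  also have "\<dots> = pair_pmf K K"
    by (simp add: numeral_2_eq_2 map_bind_pmf bind_map_pmf pmf.map_comp o_def bind_return_pmf
        pair_pmf_def map_pmf_def[symmetric])
  finally show ?thesis .
qed

lemma ent_br: assumes "finite (set_pmf K)" shows "shannon_ent (blocksR K k) = real k * shannon_ent K"
proof (induction k)
  case 0 then show ?case by (simp add: shannon_ent_def)
next
  case (Suc k)
  have eq: "blocksR K (Suc k) = map_pmf (\<lambda>(bs,b). bs @ [b]) (bind_pmf (blocksR K k) (\<lambda>bs. map_pmf (Pair bs) K))"
    by (simp add: map_bind_pmf pmf.map_comp o_def)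
  have fin: "finite (set_pmf (bind_pmf (blocksR K k) (\<lambda>bs. map_pmf (Pair bs) K)))"
    using br_fin[OF assms, of k] assms by simp
  have inj: "inj_on (\<lambda>(bs,b). bs @ [b]) (set_pmf (bind_pmf (blocksR K k) (\<lambda>bs. map_pmf (Pair bs) K)))"
    by (auto simp: inj_on_def dest!: br_len)
  have "shannon_ent (blocksR K (Suc k)) = shannon_ent (blocksR K k) + (\<Sum>c\<in>set_pmf (blocksR K k). pmf (blocksR K k) c * shannon_ent K)"
    unfolding eq ent_inj[OF fin inj] using br_fin[OF assms, of k] assms by (intro ent_bind_pair) auto
  also have "\<dots> = shannon_ent (blocksR K k) + shannon_ent K"
    using br_fin[OF assms, of k] by (simp add: sum_distrib_right[symmetric] sum_pmf_eq_1)
  finally show ?case using Suc.IH by (simp add: algebra_simps)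
qed

lemma ent_pair: assumes "finite (set_pmf K)" shows "shannon_ent (pair_pmf K K) = 2 * shannon_ent K"
proof -
  have "pair_pmf K K = bind_pmf K (\<lambda>a. map_pmf (Pair a) K)"
    by (simp add: pair_pmf_def map_pmf_def)
  then have "shannon_ent (pair_pmf K K) = shannon_ent K + (\<Sum>c\<in>set_pmf K. pmf K c * shannon_ent K)"
    using assms ent_bind_pair[of K "\<lambda>_. K"] by simp
  also have "\<dots> = 2 * shannon_ent K"
    using assms by (simp add: sum_distrib_right[symmetric] sum_pmf_eq_1)
  finally show ?thesis .
qed

lemma map_bind_Pair:
  "map_pmf f (bind_pmf \<pi> (\<lambda>c. map_pmf (Pair c) (D c))) = bind_pmf \<pi> (\<lambda>c. map_pmf (\<lambda>x. f (c, x)) (D c))"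
  by (simp add: map_bind_pmf pmf.map_comp o_def)



lemma map_bind_Pair2:
  "map_pmf (\<lambda>z. f (fst z) (g (snd z))) (bind_pmf \<pi> (\<lambda>c. map_pmf (Pair c) (D c)))
    = map_pmf (\<lambda>(c,x). f c x) (bind_pmf \<pi> (\<lambda>c. map_pmf (Pair c) (map_pmf g (D c))))"
  by (simp add: map_bind_pmf pmf.map_comp o_def)

lemma abstract_main:
  fixes \<pi> :: "'c pmf" and K :: "'c \<Rightarrow> 'b pmf" and P and \<delta> :: real
  assumes finpi: "finite (set_pmf \<pi>)" and finK: "\<And>c. c \<in> set_pmf \<pi> \<Longrightarrow> finite (set_pmf (K c))"
    and k1: "1 \<le> k"
    and Pdef: "P = bind_pmf \<pi> (\<lambda>c. map_pmf (Pair c) (blocksR (K c) k))"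
    and hyp: "\<forall>i\<in>{1..<k}.
           KL (map_pmf (\<lambda>z. (snd z ! (i - 1), (snd z ! i, fst z))) P)
              (pair_pmf (map_pmf (\<lambda>z. snd z ! (i - 1)) P) (map_pmf (\<lambda>z. (snd z ! i, fst z)) P)) \<le> \<delta>"
  shows "KL (map_pmf snd P) (indep_list (map (\<lambda>i. map_pmf (\<lambda>z. snd z ! i) P) [0..<k])) \<le> (real k - 1) * \<delta>"
proof -
  define B where "B = bind_pmf \<pi> K"
  define h where "h = (\<Sum>c\<in>set_pmf \<pi>. pmf \<pi> c * shannon_ent (K c))"
  define J0 where "J0 = bind_pmf \<pi> (\<lambda>c. map_pmf (Pair c) (K c))"
  have finP: "finite (set_pmf P)" unfolding Pdef using finpi finK br_fin by auto
  have finJ0: "finite (set_pmf J0)" unfolding J0_def using finpi finK by auto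
  have HJ0: "shannon_ent J0 = shannon_ent \<pi> + h"
    unfolding J0_def h_def using finpi finK by (rule ent_bind_pair)
  have HP: "shannon_ent P = shannon_ent \<pi> + real k * h"
    unfolding Pdef h_def using finpi finK br_fin
    by (subst ent_bind_pair) (auto simp: ent_br sum_distrib_left intro!: sum.cong)
  have nthP: "map_pmf (\<lambda>z. snd z ! i) P = B" if "i < k" for i
    unfolding Pdef map_bind_Pair B_def
    by (simp add: br_nth[OF that] pmf.map_comp[symmetric, of "\<lambda>l. l ! i" snd, unfolded o_def] )
  have finS: "finite (set_pmf (map_pmf snd P))" using finP by simp
  have lenS: "length l = k" if "l \<in> set_pmf (map_pmf snd P)" for l
    using that unfolding Pdef by (auto dest: br_len)
  have eqlist: "map (\<lambda>i. map_pmf (\<lambda>z. snd z ! i) P) [0..<k] = map (\<lambda>i. map_pmf (\<lambda>l. l ! i) (map_pmf snd P)) [0..<k]"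
    by (simp add: pmf.map_comp o_def)
  have LHS: "KL (map_pmf snd P) (indep_list (map (\<lambda>i. map_pmf (\<lambda>z. snd z ! i) P) [0..<k]))
      = real k * shannon_ent B - shannon_ent (map_pmf snd P)"
  proof -
    have "(\<Sum>i<k. shannon_ent (map_pmf (\<lambda>l. l ! i) (map_pmf snd P))) = (\<Sum>i<k. shannon_ent B)"
    proof (intro sum.cong refl)
      fix i assume "i \<in> {..<k}"
      then have "map_pmf (\<lambda>l. l ! i) (map_pmf snd P) = B" using nthP[of i] by (simp add: pmf.map_comp o_def)
      then show "shannon_ent (map_pmf (\<lambda>l. l ! i) (map_pmf snd P)) = shannon_ent B" by simp
    qed
    then show ?thesis unfolding eqlist using KL_indep[OF finS lenS] by simp
  qed
  define J where "J = map_pmf (\<lambda>z. (fst z, (snd z ! 0, snd z))) P"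
  have finJ: "finite (set_pmf J)" unfolding J_def using finP by simp
  have HJ: "shannon_ent J = shannon_ent P"
    unfolding J_def using finP by (intro ent_inj) (auto simp: inj_on_def prod_eq_iff)
  have J1: "map_pmf (\<lambda>z. fst (snd z)) J = B" unfolding J_def using nthP[of 0] k1 by (simp add: pmf.map_comp o_def)
  have J2: "map_pmf (\<lambda>z. (fst z, fst (snd z))) J = J0"
  proof -
    have "map_pmf (\<lambda>z. (fst z, fst (snd z))) J = map_pmf (\<lambda>z. Pair (fst z) ((\<lambda>l. l ! 0) (snd z))) P"
      unfolding J_def by (simp add: pmf.map_comp o_def)
    also have "\<dots> = J0" unfolding Pdef map_bind_Pair2[of Pair "\<lambda>l. l ! 0"] J0_def using k1 by (simp add: br_nth)
    finally show ?thesis .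
  qed
  have J3: "shannon_ent (map_pmf snd J) = shannon_ent (map_pmf snd P)"
  proof -
    have "map_pmf snd J = map_pmf (\<lambda>l. (l ! 0, l)) (map_pmf snd P)" unfolding J_def by (simp add: pmf.map_comp o_def)
    then show ?thesis using finS by (simp add: ent_inj inj_on_def)
  qed
  have sub: "shannon_ent P + shannon_ent B \<le> shannon_ent \<pi> + h + shannon_ent (map_pmf snd P)"
    using submod[OF finJ] unfolding HJ J1 J2 J3 HJ0 .
  have main: "KL (map_pmf snd P) (indep_list (map (\<lambda>i. map_pmf (\<lambda>z. snd z ! i) P) [0..<k]))
      \<le> (real k - 1) * (shannon_ent B - h)"
    unfolding LHS using sub HP by (simp add: algebra_simps)
  show ?thesis
  proof (cases "k = 1")
    case True then show ?thesis using main by simp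
  next
    case False
    then have k2: "2 \<le> k" using k1 by simp
    define J1 where "J1 = map_pmf (\<lambda>z. (snd z ! 0, (snd z ! 1, fst z))) P"
    have finJ1: "finite (set_pmf J1)" unfolding J1_def using finP by simp
    have h1: "KL J1 (pair_pmf (map_pmf fst J1) (map_pmf snd J1)) \<le> \<delta>"
      proof -
      have "1 \<in> {1..<k}" using k2 by simp
      from hyp[rule_format, OF this] show ?thesis unfolding J1_def by (simp add: pmf.map_comp o_def)
    qed
    have f1: "map_pmf fst J1 = B" unfolding J1_def using nthP[of 0] k2 by (simp add: pmf.map_comp o_def)
    have s1: "shannon_ent (map_pmf snd J1) = shannon_ent \<pi> + h"
    proof -
      have "map_pmf snd J1 = map_pmf prod.swap J0"
      proof -
        have "map_pmf snd J1 = map_pmf (\<lambda>z. (\<lambda>c x. (x, c)) (fst z) ((\<lambda>l. l ! 1) (snd z))) P"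
          unfolding J1_def by (simp add: pmf.map_comp o_def)
        also have "\<dots> = map_pmf prod.swap J0" unfolding Pdef map_bind_Pair2[of "\<lambda>c x. (x, c)" "\<lambda>l. l ! 1"] J0_def using k2
          by (simp add: br_nth prod.swap_def case_prod_beta' map_bind_pmf pmf.map_comp o_def)
        finally show ?thesis .
      qed
      then show ?thesis using finJ0 HJ0 by (simp add: ent_inj)
    qed
    have j1: "shannon_ent J1 = shannon_ent \<pi> + 2 * h"
    proof -
      define J2 where "J2 = bind_pmf \<pi> (\<lambda>c. map_pmf (Pair c) (pair_pmf (K c) (K c)))"
      have "J1 = map_pmf (\<lambda>(c,(a,b)). (a,(b,c))) J2"
      proof -
        have "J1 = map_pmf (\<lambda>z. (\<lambda>c ab. (fst ab, (snd ab, c))) (fst z) ((\<lambda>l. (l ! 0, l ! 1)) (snd z))) P"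
          unfolding J1_def by simp
        also have "\<dots> = map_pmf (\<lambda>(c,(a,b)). (a,(b,c))) J2" unfolding Pdef map_bind_Pair2[of "\<lambda>c ab. (fst ab, (snd ab, c))" "\<lambda>l. (l ! 0, l ! 1)"] J2_def
        proof (simp add: case_prod_beta' map_bind_pmf pmf.map_comp o_def, intro bind_pmf_cong refl)
          fix c
          have "map_pmf (\<lambda>xa. (xa ! 0, xa ! 1, c)) (blocksR (K c) k)
              = map_pmf (\<lambda>ab. (fst ab, snd ab, c)) (map_pmf (\<lambda>l. (l ! 0, l ! 1)) (blocksR (K c) k))"
            by (simp add: pmf.map_comp o_def)
          also have "\<dots> = map_pmf (\<lambda>ab. (fst ab, snd ab, c)) (pair_pmf (K c) (K c))" by (simp only: br_two[OF k2])
          finally show "map_pmf (\<lambda>xa. (xa ! 0, xa ! Suc 0, c)) (blocksR (K c) k) = map_pmf (\<lambda>xa. (fst xa, snd xa, c)) (pair_pmf (K c) (K c))"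
            by simp
        qed
        finally show ?thesis .
      qed
      moreover have "finite (set_pmf J2)" unfolding J2_def using finpi finK by auto
      moreover have "shannon_ent J2 = shannon_ent \<pi> + 2 * h"
        unfolding J2_def h_def using finpi finK
        by (subst ent_bind_pair) (auto simp: ent_pair sum_distrib_left intro!: sum.cong)
      moreover have "inj_on (\<lambda>(c::'c,a::'b,b::'b). (a,b,c)) (set_pmf J2)" by (auto simp: inj_on_def)
      ultimately show ?thesis using ent_inj by metis
    qed
    have "shannon_ent B - h \<le> \<delta>"
    proof -
      have e: "KL J1 (pair_pmf (map_pmf fst J1) (map_pmf snd J1)) = shannon_ent B + (shannon_ent \<pi> + h) - (shannon_ent \<pi> + 2 * h)"
        by (subst KL_pair[OF finJ1]) (simp only: s1 j1 f1)
      show ?thesis using h1 unfolding e by simp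
    qed
    then have "(real k - 1) * (shannon_ent B - h) \<le> (real k - 1) * \<delta>"
      using k1 by (intro mult_left_mono) auto
    then show ?thesis using main by simp
  qed
qed



definition Kblk where
  "Kblk q qY qV n \<beta> cb = bind_pmf (iid (2^n) (map_pmf fst q)) (\<lambda>x.
     bind_pmf (pmf_of_set (Pi\<^sub>E (F3 q qV n \<beta>) (\<lambda>_. {..<qV}))) (\<lambda>c.
     map_pmf (Pair x) (block q qY qV n \<beta> x cb c)))"

lemma scheme_blocks_eq: "scheme_blocks q qY qV n \<beta> cb k = blocksR (Kblk q qY qV n \<beta> cb) k"
  by (induction k) (simp_all add: Kblk_def map_bind_pmf bind_map_pmf pmf.map_comp o_def)

lemma iid_len: "x \<in> set_pmf (iid m p) \<Longrightarrow> length x = m"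
  by (induction m arbitrary: x) auto

lemma block_set: assumes "0 < qY" "y \<in> set_pmf (block q qY qV n \<beta> x cb c)"
  shows "length y = 2^n \<and> set y \<subseteq> {..<qY}"
  using assms unfolding block_def polar_def by auto

lemma Kblk_fin:
  fixes q :: "('x::finite \<times> nat \<times> nat) pmf"
  assumes "0 < qY"
  shows "finite (set_pmf (Kblk q qY qV n \<beta> cb))"
proof -
  have "set_pmf (Kblk q qY qV n \<beta> cb) \<subseteq> {xs. set xs \<subseteq> UNIV \<and> length xs = 2^n} \<times> {ys. set ys \<subseteq> {..<qY} \<and> length ys = 2^n}"
    unfolding Kblk_def using block_set[OF assms] by (fastforce dest: iid_len)
  moreover have "finite ({xs::'x list. set xs \<subseteq> UNIV \<and> length xs = 2^n} \<times> {ys. set ys \<subseteq> {..<qY} \<and> length ys = 2^n})"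
    by (intro finite_cartesian_product finite_lists_length_eq) auto
  ultimately show ?thesis by (rule finite_subset)
qed

theorem lemma12:
  fixes q :: "('x::finite \<times> nat \<times> nat) pmf"
    and qY qV n k :: nat and \<beta> \<delta>C :: real
  assumes "prime qY" and "prime qV"
    and "set_pmf q \<subseteq> UNIV \<times> {..<qY} \<times> {..<qV}"
    and "markov_XVY q"
    and "0 < \<beta>" and "\<beta> < 1/2"
    and "1 \<le> k"
    and "\<forall>i\<in>{1..<k}.
           KL (map_pmf (\<lambda>z. (snd z ! (i - 1), (snd z ! i, fst z))) (scheme q qY qV n \<beta> k))
              (pair_pmf (map_pmf (\<lambda>z. snd z ! (i - 1)) (scheme q qY qV n \<beta> k))
                        (map_pmf (\<lambda>z. (snd z ! i, fst z)) (scheme q qY qV n \<beta> k)))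
           \<le> \<delta>C"
  shows "KL (map_pmf snd (scheme q qY qV n \<beta> k))
            (indep_list (map (\<lambda>i. map_pmf (\<lambda>z. snd z ! i) (scheme q qY qV n \<beta> k)) [0..<k]))
         \<le> (real k - 1) * \<delta>C"
proof (rule abstract_main)
  let ?A = "Pi\<^sub>E (F2 q qV n \<beta>) (\<lambda>_. {..<qV})"
  have qY: "0 < qY" using assms(1) by (simp add: prime_gt_0_nat)
  have qV: "0 < qV" using assms(2) by (simp add: prime_gt_0_nat)
  have finF2: "finite (F2 q qV n \<beta>)" unfolding F2_def VVXY_def by simp
  have finA: "finite ?A" using finF2 by (intro finite_PiE) auto
  have neA: "?A \<noteq> {}" using qV by (auto simp: PiE_eq_empty_iff)
  show "finite (set_pmf (pmf_of_set ?A))" using finA neA by simp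
  show "\<And>c. c \<in> set_pmf (pmf_of_set ?A) \<Longrightarrow> finite (set_pmf (Kblk q qY qV n \<beta> c))"
    using Kblk_fin[OF qY] by blast
  show "1 \<le> k" by fact
  show "scheme q qY qV n \<beta> k = bind_pmf (pmf_of_set ?A) (\<lambda>c. map_pmf (Pair c) (blocksR (Kblk q qY qV n \<beta> c) k))"
    unfolding scheme_def scheme_blocks_eq by (simp add: Pair_def)
qed (use assms(8) in simp)


end
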